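(* Let $G$ be a nilpotent group of class at most $2$ (so $[G,G]$ is central), let $w=(w_1,\dots,w_l)\in G^l$ be a word of length $l$ over $G$, and let $x\in G$. For $0\le i\le l$ let $w_{\le i}=(w_1,\dots,w_i)$ be the $i$-th prefix of $w$, and set $A=\{[x,\mathrm{val}(w_{\le i})] : 0\le i\le l\}\subseteq[G,G]$. Then for every word $u$ obtained from $w$ by inserting $n$ occurrences of the letter $x$ (at arbitrary positions), we have $\mathrm{val}(u)\in \mathrm{val}(x^nw)\,A^n$. Moreover, if $\mathrm{val}(u)\in\mathrm{val}(x^nw)\,B^n$ for some subset $B\subseteq A$, then there is a word $u'$ obtained from $w$ by inserting $n$ occurrences of $x$ such that these occurrences form at most $|B|$ maximal blocks of consecutive letters $x$ (i.e. powers $x^{c}$), and $\mathrm{val}(u')=\mathrm{val}(u)$.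
   Context: A word over $G$ is a finite sequence of elements of $G$; $\mathrm{val}$ of a word is the product of its letters in $G$ (the empty word has value $1$); $x^nw$ is the word consisting of $n$ letters $x$ followed by $w$. Commutators are taken with the convention $[x,g]=g^{-1}x^{-1}gx$, so that $gx=xg[x,g]$. For a subset $B$ of the abelian group $[G,G]$, $B^n=\{c_1c_2\cdots c_n: c_i\in B\}$, and $gB^n=\{gc: c\in B^n\}$. *)

theory Defs
  imports "HOL-Algebra.Group"
begin

definition commutator :: "('a, 'b) monoid_scheme \<Rightarrow> 'a \<Rightarrow> 'a \<Rightarrow> 'a" where
  "commutator G x g = inv\<^bsub>G\<^esub> g \<otimes>\<^bsub>G\<^esub> inv\<^bsub>G\<^esub> x \<otimes>\<^bsub>G\<^esub> g \<otimes>\<^bsub>G\<^esub> x"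

text \<open>Nilpotent of class at most 2: the commutator subgroup [G,G] is central,
  i.e. every commutator (hence every element of the subgroup they generate)
  commutes with every element.\<close>
definition nilpotent_class_le_2 :: "('a, 'b) monoid_scheme \<Rightarrow> bool" where
  "nilpotent_class_le_2 G \<longleftrightarrow> group G \<and>
     (\<forall>a\<in>carrier G. \<forall>b\<in>carrier G. \<forall>c\<in>carrier G.
        commutator G a b \<otimes>\<^bsub>G\<^esub> c = c \<otimes>\<^bsub>G\<^esub> commutator G a b)"

definition word_val :: "('a, 'b) monoid_scheme \<Rightarrow> 'a list \<Rightarrow> 'a" where
  "word_val G w = foldr (\<lambda>a b. a \<otimes>\<^bsub>G\<^esub> b) w \<one>\<^bsub>G\<^esub>"

definition set_pow :: "('a, 'b) monoid_scheme \<Rightarrow> 'a set \<Rightarrow> nat \<Rightarrow> 'a set" where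
  "set_pow G B n = {word_val G cs | cs. length cs = n \<and> set cs \<subseteq> B}"

definition lcoset_pow :: "('a, 'b) monoid_scheme \<Rightarrow> 'a \<Rightarrow> 'a set \<Rightarrow> nat \<Rightarrow> 'a set" where
  "lcoset_pow G g B n = (\<lambda>c. g \<otimes>\<^bsub>G\<^esub> c) ` set_pow G B n"

definition insertions :: "'a \<Rightarrow> nat \<Rightarrow> 'a list \<Rightarrow> 'a list set" where
  "insertions x n w = shuffles w (replicate n x)"

text \<open>The word x^{c 0} w_1 x^{c 1} w_2 ... w_l x^{c l}, where c i is the number of
  inserted letters x placed right after the prefix of length i.\<close>
definition insert_pattern :: "'a \<Rightarrow> 'a list \<Rightarrow> (nat \<Rightarrow> nat) \<Rightarrow> 'a list" where
  "insert_pattern x w c =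
     concat (map (\<lambda>i. replicate (c i) x @ [w ! i]) [0..<length w]) @ replicate (c (length w)) x"

text \<open>Number of maximal blocks formed by the inserted letters.\<close>
definition num_blocks :: "'a list \<Rightarrow> (nat \<Rightarrow> nat) \<Rightarrow> nat" where
  "num_blocks w c = card {i. i \<le> length w \<and> 0 < c i}"

end

theory Submission
  imports Defs
begin

definition central :: "('a, 'b) monoid_scheme \<Rightarrow> 'a \<Rightarrow> bool" where
  "central G z \<longleftrightarrow> z \<in> carrier G \<and> (\<forall>g\<in>carrier G. z \<otimes>\<^bsub>G\<^esub> g = g \<otimes>\<^bsub>G\<^esub> z)"

definition CL :: "('a, 'b) monoid_scheme \<Rightarrow> 'a \<Rightarrow> 'a \<Rightarrow> 'a list \<Rightarrow> (nat \<Rightarrow> nat) \<Rightarrow> nat \<Rightarrow> 'a list" where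
  "CL G x p w c k = concat (map (\<lambda>i. replicate (c i) (commutator G x (p \<otimes>\<^bsub>G\<^esub> word_val G (take i w)))) [0..<k])"

lemma CL_0[simp]: "CL G x p w c 0 = []" by (simp add: CL_def)
lemma CL_Suc: "CL G x p w c (Suc k) = CL G x p w c k @ replicate (c k) (commutator G x (p \<otimes>\<^bsub>G\<^esub> word_val G (take k w)))"
  by (simp add: CL_def)

lemma length_CL: "length (CL G x p w c k) = (\<Sum>i<k. c i)"
  by (induct k) (simp_all add: CL_Suc)

lemma set_CL: "set (CL G x p w c k) \<subseteq> {commutator G x (p \<otimes>\<^bsub>G\<^esub> word_val G (take i w)) | i. i < k}"
  by (auto simp: CL_def)

lemma IP_Nil: "insert_pattern x [] c = replicate (c 0) x"
  by (simp add: insert_pattern_def)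

lemma IP_Cons: "insert_pattern x (a#w) c = replicate (c 0) x @ a # insert_pattern x w (\<lambda>i. c (Suc i))"
proof -
  have "[0..<length (a#w)] = 0 # map Suc [0..<length w]"
    by (simp add: upt_conv_Cons map_Suc_upt del: upt_Suc)
  then show ?thesis by (simp add: insert_pattern_def o_def)
qed

lemma IP_x: "insert_pattern x w (c(0 := Suc (c 0))) = x # insert_pattern x w c"
proof (cases w)
  case Nil then show ?thesis by (simp add: IP_Nil)
next
  case (Cons a w') then show ?thesis by (simp add: IP_Cons)
qed

lemma shuffles_IP:
  "u \<in> shuffles w (replicate n x) \<Longrightarrow> \<exists>c. (\<Sum>i\<le>length w. c i) = n \<and> u = insert_pattern x w c"
proof (induct u arbitrary: w n)
  case Nil
  then show ?case by (intro exI[of _ "\<lambda>_. 0"]) (simp add: IP_Nil)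
next
  case (Cons z zs)
  from Cons.prems[unfolded Cons_in_shuffles_iff] show ?case
  proof
    assume h: "w \<noteq> [] \<and> hd w = z \<and> zs \<in> shuffles (tl w) (replicate n x)"
    then obtain w' where w: "w = z # w'" by (cases w) auto
    with h Cons.hyps obtain c where c: "(\<Sum>i\<le>length w'. c i) = n" "zs = insert_pattern x w' c" by auto
    define c' where "c' = (\<lambda>i. if i = 0 then 0 else c (i - 1))"
    have "(\<Sum>i\<le>length w. c' i) = c' 0 + (\<Sum>i\<le>length w'. c' (Suc i))"
      unfolding w by (simp only: length_Cons sum.atMost_Suc_shift)
    also have "\<dots> = n" using c by (simp add: c'_def)
    finally show ?thesis using c w by (intro exI[of _ c']) (simp add: IP_Cons c'_def)
  next
    assume h: "replicate n x \<noteq> [] \<and> hd (replicate n x) = z \<and> zs \<in> shuffles w (tl (replicate n x))"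
    then obtain m where n: "n = Suc m" and z: "z = x" by (cases n) auto
    with h Cons.hyps obtain c where c: "(\<Sum>i\<le>length w. c i) = m" "zs = insert_pattern x w c" by auto
    have "(\<Sum>i\<le>length w. (c(0 := Suc (c 0))) i) = Suc m"
      using c(1) by (simp add: sum.atMost_shift)
    then show ?thesis using c n z IP_x by metis
  qed
qed

context group
begin

lemma wv_Nil[simp]: "word_val G [] = \<one>" by (simp add: word_val_def)
lemma wv_Cons[simp]: "word_val G (a # xs) = a \<otimes> word_val G xs" by (simp add: word_val_def)

lemma wv_closed[simp]: "set xs \<subseteq> carrier G \<Longrightarrow> word_val G xs \<in> carrier G"
  by (induct xs) auto

lemma wv_append: "set xs \<subseteq> carrier G \<Longrightarrow> set ys \<subseteq> carrier G \<Longrightarrow>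
   word_val G (xs @ ys) = word_val G xs \<otimes> word_val G ys"
  by (induct xs) (auto simp: m_assoc)

lemma wv_replicate: "a \<in> carrier G \<Longrightarrow> word_val G (replicate n a) = a [^] n"
  by (induct n) (simp_all add: nat_pow_Suc2[symmetric])

lemma comm_closed[simp]: "a \<in> carrier G \<Longrightarrow> b \<in> carrier G \<Longrightarrow> commutator G a b \<in> carrier G"
  by (simp add: commutator_def)

lemma central_one: "central G \<one>" by (simp add: central_def)
lemma central_mult: "central G a \<Longrightarrow> central G b \<Longrightarrow> central G (a \<otimes> b)"
proof -
  assume ca: "central G a" and cb: "central G b"
  have a: "a \<in> carrier G" and b: "b \<in> carrier G" using ca cb by (auto simp: central_def)
  have "a \<otimes> b \<otimes> g = g \<otimes> (a \<otimes> b)" if g: "g \<in> carrier G" for g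
  proof -
    have "a \<otimes> b \<otimes> g = a \<otimes> (b \<otimes> g)" using a b g by (simp add: m_assoc)
    also have "b \<otimes> g = g \<otimes> b" using cb g unfolding central_def by blast
    also have "a \<otimes> (g \<otimes> b) = (a \<otimes> g) \<otimes> b" using a b g by (simp add: m_assoc)
    also have "a \<otimes> g = g \<otimes> a" using ca g unfolding central_def by blast
    also have "(g \<otimes> a) \<otimes> b = g \<otimes> (a \<otimes> b)" using a b g by (simp add: m_assoc)
    finally show ?thesis .
  qed
  then show ?thesis using a b by (simp add: central_def)
qed

lemma central_pow: "central G a \<Longrightarrow> central G (a [^] (n::nat))"
  by (induct n) (auto simp: central_one central_mult)
lemma central_wv: "\<forall>z\<in>set xs. central G z \<Longrightarrow> central G (word_val G xs)"
  by (induct xs) (auto simp: central_one central_mult)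
lemma central_carrier: "central G z \<Longrightarrow> z \<in> carrier G" by (simp add: central_def)
lemma central_comm: "central G z \<Longrightarrow> g \<in> carrier G \<Longrightarrow> z \<otimes> g = g \<otimes> z"
  by (simp add: central_def)

lemma cancel_l: "a \<in> carrier G \<Longrightarrow> y \<in> carrier G \<Longrightarrow> a \<otimes> (inv a \<otimes> y) = y"
proof -
  assume a: "a \<in> carrier G" and y: "y \<in> carrier G"
  have "a \<otimes> (inv a \<otimes> y) = (a \<otimes> inv a) \<otimes> y" using a y by (intro m_assoc[symmetric]) auto
  then show ?thesis using a y by simp
qed

lemma swap1: "g \<in> carrier G \<Longrightarrow> x \<in> carrier G \<Longrightarrow> g \<otimes> x = x \<otimes> g \<otimes> commutator G x g"
proof -
  assume g: "g \<in> carrier G" and x: "x \<in> carrier G"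
  have "x \<otimes> g \<otimes> commutator G x g = x \<otimes> (g \<otimes> (inv g \<otimes> (inv x \<otimes> (g \<otimes> x))))"
    using g x by (simp add: commutator_def m_assoc)
  also have "\<dots> = g \<otimes> x" using g x by (simp add: cancel_l)
  finally show ?thesis by simp
qed

end

context group
begin

lemma central_commutator: "nilpotent_class_le_2 G \<Longrightarrow> a \<in> carrier G \<Longrightarrow> b \<in> carrier G \<Longrightarrow> central G (commutator G a b)"
  unfolding central_def nilpotent_class_le_2_def by auto

lemma wv_take_closed[simp]: "set w \<subseteq> carrier G \<Longrightarrow> word_val G (take i w) \<in> carrier G"
  using set_take_subset[of i w] by (intro wv_closed) blast

lemma set_IP: "set (insert_pattern x w c) \<subseteq> insert x (set w)"
  by (auto simp: insert_pattern_def dest: nth_mem)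

lemma set_CL_carrier: "x \<in> carrier G \<Longrightarrow> p \<in> carrier G \<Longrightarrow> set w \<subseteq> carrier G \<Longrightarrow> set (CL G x p w c k) \<subseteq> carrier G"
  using set_CL[of G x p w c k] by auto

lemma central_CL: "nilpotent_class_le_2 G \<Longrightarrow> x \<in> carrier G \<Longrightarrow> p \<in> carrier G \<Longrightarrow> set w \<subseteq> carrier G \<Longrightarrow> central G (word_val G (CL G x p w c k))"
  apply (rule central_wv)
  using set_CL[of G x p w c k] by (auto intro!: central_commutator)

lemma swapn:
  assumes g: "g \<in> carrier G" and x: "x \<in> carrier G" and cz: "central G (commutator G x g)"
  shows "g \<otimes> x [^] (m::nat) = x [^] m \<otimes> g \<otimes> commutator G x g [^] m"
proof (induct m)
  case 0 then show ?case using g by simp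
next
  case (Suc m)
  define z where "z = commutator G x g"
  have z: "z \<in> carrier G" using g x by (simp add: z_def)
  have czm: "central G (z [^] m)" using cz central_pow z_def by blast
  have "g \<otimes> x [^] Suc m = (g \<otimes> x [^] m) \<otimes> x" using g x by (simp add: m_assoc)
  also have "\<dots> = x [^] m \<otimes> g \<otimes> (z [^] m \<otimes> x)" using Suc g x z by (simp add: m_assoc z_def)
  also have "z [^] m \<otimes> x = x \<otimes> z [^] m" using czm x by (rule central_comm)
  also have "x [^] m \<otimes> g \<otimes> (x \<otimes> z [^] m) = x [^] m \<otimes> (g \<otimes> x) \<otimes> z [^] m" using g x z by (simp add: m_assoc)
  also have "g \<otimes> x = x \<otimes> g \<otimes> z" using swap1[OF g x] z_def by simp
  also have "x [^] m \<otimes> (x \<otimes> g \<otimes> z) \<otimes> z [^] m = (x [^] m \<otimes> x) \<otimes> g \<otimes> (z \<otimes> z [^] m)" using g x z by (simp add: m_assoc)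
  also have "z \<otimes> z [^] m = z [^] Suc m" using nat_pow_Suc2[OF z, of m] by simp
  finally show ?case using x by (simp add: z_def)
qed

lemma CL_Cons:
  assumes "p \<in> carrier G" "a \<in> carrier G" "set w \<subseteq> carrier G"
  shows "CL G x p (a#w) c (Suc k) = replicate (c 0) (commutator G x p) @ CL G x (p \<otimes> a) w (\<lambda>i. c (Suc i)) k"
proof -
  have "[0..<Suc k] = 0 # map Suc [0..<k]"
    by (simp add: upt_conv_Cons map_Suc_upt del: upt_Suc)
  then show ?thesis using assms by (simp add: CL_def o_def m_assoc)
qed

lemma PV:
  assumes nil: "nilpotent_class_le_2 G" and x: "x \<in> carrier G"
  shows "p \<in> carrier G \<Longrightarrow> set w \<subseteq> carrier G \<Longrightarrow>
    p \<otimes> word_val G (insert_pattern x w c) =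
    x [^] (\<Sum>i\<le>length w. c i) \<otimes> (p \<otimes> word_val G w) \<otimes> word_val G (CL G x p w c (Suc (length w)))"
proof (induct w arbitrary: p c)
  case Nil
  have cz: "central G (commutator G x p)" using central_commutator nil x Nil by blast
  show ?case using Nil x
    by (simp add: IP_Nil CL_def wv_replicate swapn[OF _ x cz])
next
  case (Cons a w)
  have p: "p \<in> carrier G" and a: "a \<in> carrier G" and w: "set w \<subseteq> carrier G" using Cons.prems by auto
  define z where "z = commutator G x p [^] c 0"
  have cz: "central G (commutator G x p)" using central_commutator nil x p by blast
  have czz: "central G z" unfolding z_def using cz by (rule central_pow)
  have zc: "z \<in> carrier G" using czz central_carrier by blast
  define V where "V = word_val G (insert_pattern x w (\<lambda>i. c (Suc i)))"
  have Vc: "V \<in> carrier G" unfolding V_def using set_IP[of x w] x w by (intro wv_closed) blast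
  define C where "C = word_val G (CL G x (p \<otimes> a) w (\<lambda>i. c (Suc i)) (Suc (length w)))"
  have Cc: "C \<in> carrier G" unfolding C_def using set_CL_carrier[of x "p \<otimes> a" w] x p a w by (intro wv_closed) blast
  define S where "S = (\<Sum>i\<le>length w. c (Suc i))"
  have IH: "(p \<otimes> a) \<otimes> V = x [^] S \<otimes> (p \<otimes> a \<otimes> word_val G w) \<otimes> C"
    using Cons.hyps[of "p \<otimes> a" "\<lambda>i. c (Suc i)"] p a w by (simp add: V_def C_def S_def)
  have wc: "word_val G w \<in> carrier G" using w by simp
  have "p \<otimes> word_val G (insert_pattern x (a # w) c) = p \<otimes> (x [^] c 0 \<otimes> (a \<otimes> V))"
    unfolding IP_Cons V_def using x a w set_IP[of x w] by (subst wv_append) (auto simp: wv_replicate)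
  also have "\<dots> = (p \<otimes> x [^] c 0) \<otimes> (a \<otimes> V)" using p x a Vc by (simp add: m_assoc)
  also have "p \<otimes> x [^] c 0 = x [^] c 0 \<otimes> p \<otimes> z" unfolding z_def using swapn[OF p x cz] .
  also have "x [^] c 0 \<otimes> p \<otimes> z \<otimes> (a \<otimes> V) = x [^] c 0 \<otimes> (p \<otimes> (z \<otimes> (a \<otimes> V)))" using p x a Vc zc by (simp add: m_assoc)
  also have "z \<otimes> (a \<otimes> V) = (a \<otimes> V) \<otimes> z" using czz a Vc by (intro central_comm) auto
  also have "p \<otimes> ((a \<otimes> V) \<otimes> z) = ((p \<otimes> a) \<otimes> V) \<otimes> z" using p a Vc zc by (simp add: m_assoc)
  also note IH
  also have "x [^] c 0 \<otimes> (x [^] S \<otimes> (p \<otimes> a \<otimes> word_val G w) \<otimes> C \<otimes> z) =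
      (x [^] c 0 \<otimes> x [^] S) \<otimes> (p \<otimes> (a \<otimes> word_val G w)) \<otimes> (C \<otimes> z)"
    using p a x wc Cc zc by (simp add: m_assoc)
  also have "C \<otimes> z = z \<otimes> C" using czz Cc by (intro central_comm[symmetric])
  also have "x [^] c 0 \<otimes> x [^] S = x [^] (\<Sum>i\<le>length (a # w). c i)"
    using x by (simp add: nat_pow_mult S_def sum.atMost_Suc_shift del: sum.atMost_Suc)
  also have "z \<otimes> C = word_val G (CL G x p (a # w) c (Suc (length (a # w))))"
    unfolding z_def C_def using p a w x set_CL_carrier[of x "p \<otimes> a" w]
    by (simp only: CL_Cons) (subst wv_append, auto simp: wv_replicate)
  finally show ?case by simp
qed

lemma INC:
  assumes nil: "nilpotent_class_le_2 G" and x: "x \<in> carrier G" and p: "p \<in> carrier G" and w: "set w \<subseteq> carrier G"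
  shows "word_val G (CL G x p w (\<lambda>i. c i + (if i = j then 1 else 0)) k) =
    word_val G (CL G x p w c k) \<otimes> (if j < k then commutator G x (p \<otimes> word_val G (take j w)) else \<one>)"
proof (induct k)
  case 0 then show ?case by simp
next
  case (Suc k)
  define c' where "c' = (\<lambda>i. c i + (if i = j then 1 else 0))"
  define z where "z = commutator G x (p \<otimes> word_val G (take k w))"
  have cz: "central G z" unfolding z_def using nil x p w by (intro central_commutator) auto
  have zc: "z \<in> carrier G" using cz central_carrier by blast
  define L where "L = word_val G (CL G x p w c k)"
  have Lc: "L \<in> carrier G" unfolding L_def using set_CL_carrier[OF x p w] by (intro wv_closed) blast
  have IH: "word_val G (CL G x p w c' k) = L \<otimes> (if j < k then commutator G x (p \<otimes> word_val G (take j w)) else \<one>)"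
    using Suc by (simp add: c'_def L_def)
  have e1: "word_val G (CL G x p w c' (Suc k)) = word_val G (CL G x p w c' k) \<otimes> z [^] c' k"
    unfolding CL_Suc z_def using set_CL_carrier[OF x p w] x p w by (subst wv_append) (auto simp: wv_replicate)
  have e2: "word_val G (CL G x p w c (Suc k)) = L \<otimes> z [^] c k"
    unfolding CL_Suc z_def L_def using set_CL_carrier[OF x p w] x p w by (subst wv_append) (auto simp: wv_replicate)
  show ?case
  proof (cases "j < k")
    case True
    define y where "y = commutator G x (p \<otimes> word_val G (take j w))"
    have cy: "central G y" unfolding y_def using nil x p w by (intro central_commutator) auto
    have yc: "y \<in> carrier G" using cy central_carrier by blast
    have "word_val G (CL G x p w c' (Suc k)) = L \<otimes> y \<otimes> z [^] c k"
      using e1 IH True by (simp add: c'_def y_def)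
    also have "\<dots> = L \<otimes> (y \<otimes> z [^] c k)" using Lc yc zc by (simp add: m_assoc)
    also have "y \<otimes> z [^] c k = z [^] c k \<otimes> y" using cy zc by (intro central_comm) auto
    finally show ?thesis using e2 True Lc yc zc by (simp add: c'_def y_def m_assoc)
  next
    case False
    show ?thesis
    proof (cases "j = k")
      case True
      have "word_val G (CL G x p w c' (Suc k)) = L \<otimes> z [^] Suc (c k)"
        using e1 IH True by (simp add: c'_def Lc zc)
      then show ?thesis using e2 True Lc zc by (simp add: z_def m_assoc c'_def)
    next
      case False
      then show ?thesis using e1 e2 IH \<open>\<not> j < k\<close> Lc zc by (simp add: c'_def)
    qed
  qed
qed
end


theorem mainTheorem4:
  fixes G :: "('a, 'b) monoid_scheme" and w :: "'a list" and x :: 'a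
  assumes nil: "nilpotent_class_le_2 G"
    and w_carrier: "set w \<subseteq> carrier G"
    and x_carrier: "x \<in> carrier G"
  defines "A \<equiv> {commutator G x (word_val G (take i w)) | i. i \<le> length w}"
  shows "(\<forall>n u. u \<in> insertions x n w \<longrightarrow>
            word_val G u \<in> lcoset_pow G (word_val G (replicate n x @ w)) A n)
       \<and> (\<forall>n u B. u \<in> insertions x n w \<longrightarrow> B \<subseteq> A \<longrightarrow>
            word_val G u \<in> lcoset_pow G (word_val G (replicate n x @ w)) B n \<longrightarrow>
            (\<exists>c. (\<Sum>i\<le>length w. c i) = n \<and> num_blocks w c \<le> card B \<and>
                 word_val G (insert_pattern x w c) = word_val G u))"
proof -
  have grp: "group G" using nil by (simp add: nilpotent_class_le_2_def)
  interpret group G by (rule grp)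
  note w = w_carrier and x = x_carrier
  have wc: "word_val G w \<in> carrier G" using w by simp
  have rep: "word_val G (replicate n x @ w) = x [^]\<^bsub>G\<^esub> n \<otimes>\<^bsub>G\<^esub> word_val G w" for n
    using x w by (subst wv_append) (auto simp: wv_replicate)
  have val_IP: "word_val G (insert_pattern x w c) =
      x [^]\<^bsub>G\<^esub> (\<Sum>i\<le>length w. c i) \<otimes>\<^bsub>G\<^esub> word_val G w \<otimes>\<^bsub>G\<^esub> word_val G (CL G x \<one>\<^bsub>G\<^esub> w c (Suc (length w)))" for c
  proof -
    have cl: "word_val G (insert_pattern x w c) \<in> carrier G"
      using set_IP[of x w c] x w by (intro wv_closed) blast
    have "\<one>\<^bsub>G\<^esub> \<otimes>\<^bsub>G\<^esub> word_val G (insert_pattern x w c) =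
      x [^]\<^bsub>G\<^esub> (\<Sum>i\<le>length w. c i) \<otimes>\<^bsub>G\<^esub> (\<one>\<^bsub>G\<^esub> \<otimes>\<^bsub>G\<^esub> word_val G w) \<otimes>\<^bsub>G\<^esub> word_val G (CL G x \<one>\<^bsub>G\<^esub> w c (Suc (length w)))"
      using PV[OF nil x, of "\<one>\<^bsub>G\<^esub>" w c] w by simp
    then show ?thesis using cl wc by simp
  qed
  have CLA: "set (CL G x \<one>\<^bsub>G\<^esub> w c (Suc (length w))) \<subseteq> A" for c
  proof
    fix y assume "y \<in> set (CL G x \<one>\<^bsub>G\<^esub> w c (Suc (length w)))"
    then obtain i where "i < Suc (length w)" "y = commutator G x (\<one>\<^bsub>G\<^esub> \<otimes>\<^bsub>G\<^esub> word_val G (take i w))"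
      using set_CL[of G x "\<one>\<^bsub>G\<^esub>" w c "Suc (length w)"] by blast
    then show "y \<in> A" using w unfolding A_def by auto
  qed
  have part1: "\<forall>n u. u \<in> insertions x n w \<longrightarrow>
            word_val G u \<in> lcoset_pow G (word_val G (replicate n x @ w)) A n"
  proof (intro allI impI)
    fix n u assume "u \<in> insertions x n w"
    then have "u \<in> shuffles w (replicate n x)" by (simp add: insertions_def)
    from shuffles_IP[OF this] obtain c where c: "(\<Sum>i\<le>length w. c i) = n" "u = insert_pattern x w c"
      by blast
    let ?cs = "CL G x \<one>\<^bsub>G\<^esub> w c (Suc (length w))"
    have "length ?cs = n" using c(1) by (simp add: length_CL lessThan_Suc_atMost)
    then have m: "word_val G ?cs \<in> set_pow G A n" unfolding set_pow_def using CLA by blast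
    have e: "word_val G u = word_val G (replicate n x @ w) \<otimes>\<^bsub>G\<^esub> word_val G ?cs"
      by (simp only: c(2) val_IP c(1) rep)
    show "word_val G u \<in> lcoset_pow G (word_val G (replicate n x @ w)) A n"
      unfolding lcoset_pow_def by (rule image_eqI[where f="\<lambda>c. word_val G (replicate n x @ w) \<otimes>\<^bsub>G\<^esub> c", OF e m])
  qed
  define a where "a i = commutator G x (word_val G (take i w))" for i
  define idx where "idx b = (LEAST i. i \<le> length w \<and> a i = b)" for b
  have idx: "idx b \<le> length w \<and> a (idx b) = b" if "b \<in> A" for b
  proof -
    have "\<exists>i. i \<le> length w \<and> a i = b" using that unfolding A_def a_def by blast
    then show ?thesis unfolding idx_def by (rule LeastI_ex)
  qed
  have finA: "finite A"
  proof -
    have "A = a ` {..length w}" unfolding A_def a_def by auto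
    then show ?thesis by simp
  qed
  have centA: "central G b" if "b \<in> A" for b
    using that w x unfolding A_def by (auto intro!: central_commutator[OF nil])
  have claim: "set cs \<subseteq> B \<Longrightarrow> B \<subseteq> A \<Longrightarrow> \<exists>c. (\<Sum>i\<le>length w. c i) = length cs \<and>
      {i. i \<le> length w \<and> 0 < c i} \<subseteq> idx ` B \<and>
      word_val G (CL G x \<one>\<^bsub>G\<^esub> w c (Suc (length w))) = word_val G cs" for cs B
  proof (induct cs)
    case Nil
    have "CL G x p w (\<lambda>_. 0) k = []" for p and k :: nat by (induct k) (simp_all add: CL_Suc)
    then show ?case by (intro exI[of _ "\<lambda>_. 0"]) simp
  next
    case (Cons b cs)
    then obtain c where c: "(\<Sum>i\<le>length w. c i) = length cs"
      "{i. i \<le> length w \<and> 0 < c i} \<subseteq> idx ` B"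
      "word_val G (CL G x \<one>\<^bsub>G\<^esub> w c (Suc (length w))) = word_val G cs" by auto
    have bA: "b \<in> A" and bB: "b \<in> B" using Cons.prems by auto
    define j where "j = idx b"
    have j: "j \<le> length w" "a j = b" using idx[OF bA] by (auto simp: j_def)
    define c' where "c' = (\<lambda>i. c i + (if i = j then 1 else 0))"
    have s: "(\<Sum>i\<le>length w. c' i) = length (b # cs)"
      using c(1) j(1) by (simp add: c'_def sum.distrib)
    have sup: "{i. i \<le> length w \<and> 0 < c' i} \<subseteq> idx ` B"
      using c(2) bB by (auto simp: c'_def j_def split: if_splits)
    have csc: "set cs \<subseteq> carrier G" using Cons.prems centA central_carrier by force
    have "word_val G (CL G x \<one>\<^bsub>G\<^esub> w c' (Suc (length w))) = word_val G cs \<otimes>\<^bsub>G\<^esub> b"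
      using INC[OF nil x one_closed w, of c j "Suc (length w)"] c(3) j w
      by (simp add: c'_def a_def)
    also have "\<dots> = b \<otimes>\<^bsub>G\<^esub> word_val G cs" using centA[OF bA] csc
      by (intro central_comm[symmetric]) auto
    finally show ?case using s sup by auto
  qed
  have part2: "\<forall>n u B. u \<in> insertions x n w \<longrightarrow> B \<subseteq> A \<longrightarrow>
            word_val G u \<in> lcoset_pow G (word_val G (replicate n x @ w)) B n \<longrightarrow>
            (\<exists>c. (\<Sum>i\<le>length w. c i) = n \<and> num_blocks w c \<le> card B \<and>
                 word_val G (insert_pattern x w c) = word_val G u)"
  proof (intro allI impI)
    fix n u B assume BA: "B \<subseteq> A"
      and mem: "word_val G u \<in> lcoset_pow G (word_val G (replicate n x @ w)) B n"
    then obtain cs where cs: "length cs = n" "set cs \<subseteq> B"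
      "word_val G u = word_val G (replicate n x @ w) \<otimes>\<^bsub>G\<^esub> word_val G cs"
      unfolding lcoset_pow_def set_pow_def by auto
    obtain c where c: "(\<Sum>i\<le>length w. c i) = n"
      "{i. i \<le> length w \<and> 0 < c i} \<subseteq> idx ` B"
      "word_val G (CL G x \<one>\<^bsub>G\<^esub> w c (Suc (length w))) = word_val G cs"
      using claim[OF cs(2) BA] cs(1) by auto
    have finB: "finite B" using BA finA finite_subset by blast
    have "num_blocks w c \<le> card (idx ` B)"
      unfolding num_blocks_def using c(2) finB by (intro card_mono) auto
    also have "\<dots> \<le> card B" using finB by (rule card_image_le)
    finally have nb: "num_blocks w c \<le> card B" .
    have "word_val G (insert_pattern x w c) = word_val G u"
      by (simp only: val_IP c(1) c(3) cs(3) rep)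
    then show "\<exists>c. (\<Sum>i\<le>length w. c i) = n \<and> num_blocks w c \<le> card B \<and>
                 word_val G (insert_pattern x w c) = word_val G u"
      using c(1) nb by blast
  qed
  show ?thesis using part1 part2 by blast
qed

end
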